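(* Let $\mu=g\,dx$ be a finite Borel measure on $\mathbb{R}^d$ that is absolutely continuous with respect to Lebesgue measure, with density $g\ge 0$. If $\nu$ is a frame measure for $\mu$ with frame bounds $A,B>0$, then $$\frac{B}{A}\geq\frac{\operatorname{ess\,sup}_\mu(g)}{\operatorname{ess\,inf}_\mu(g)}.$$ In particular, if $\operatorname{ess\,sup}_\mu(g)=\infty$ or $\operatorname{ess\,inf}_\mu(g)=0$, then $\mu$ admits no frame measure.
   Context: A Borel measure $\nu$ on $\mathbb{R}^d$ is a frame measure for $\mu$ with frame bounds $A,B>0$ if $A\|f\|_{L^2(\mu)}^2\le \|\widehat{f\,d\mu}\|_{L^2(\nu)}^2\le B\|f\|_{L^2(\mu)}^2$ for all $f\in L^2(\mu)$, where $\widehat{f\,d\mu}(t)=\int f(x)e^{-2\pi i t\cdot x}\,d\mu(x)$. For a nonnegative Borel function $f$: $\operatorname{ess\,sup}_\mu(f)=\inf\{M\in[0,\infty]: f\le M\ \mu\text{-a.e.}\}$ and $\operatorname{ess\,inf}_\mu(f)=\sup\{m\ge 0: f\ge m\ \mu\text{-a.e.}\}$. *)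

theory Defs
  imports "HOL-Analysis.Analysis"
begin

definition fourier_meas :: "'a::euclidean_space measure \<Rightarrow> ('a \<Rightarrow> complex) \<Rightarrow> 'a \<Rightarrow> complex" where
  "fourier_meas \<mu> f t = (LINT x|\<mu>. f x * cis (- 2 * pi * (t \<bullet> x)))"

definition L2sq :: "'a measure \<Rightarrow> ('a \<Rightarrow> complex) \<Rightarrow> ennreal" where
  "L2sq M f = (\<integral>\<^sup>+ x. ennreal ((cmod (f x))\<^sup>2) \<partial>M)"

definition frame_measure :: "'a::euclidean_space measure \<Rightarrow> 'a measure \<Rightarrow> real \<Rightarrow> real \<Rightarrow> bool" where
  "frame_measure \<mu> \<nu> A B \<longleftrightarrow> sets \<nu> = sets borel \<and> A > 0 \<and> B > 0 \<and>
     (\<forall>f. f \<in> borel_measurable \<mu> \<and> L2sq \<mu> f < \<infinity> \<longrightarrow>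
        ennreal A * L2sq \<mu> f \<le> L2sq \<nu> (fourier_meas \<mu> f) \<and>
        L2sq \<nu> (fourier_meas \<mu> f) \<le> ennreal B * L2sq \<mu> f)"

definition ess_sup_mu :: "'a measure \<Rightarrow> ('a \<Rightarrow> ennreal) \<Rightarrow> ennreal" where
  "ess_sup_mu M f = Inf {m. AE x in M. f x \<le> m}"

definition ess_inf_mu :: "'a measure \<Rightarrow> ('a \<Rightarrow> ennreal) \<Rightarrow> ennreal" where
  "ess_inf_mu M f = Sup {m. AE x in M. m \<le> f x}"

end

theory Submission
  imports Defs
begin

lemma lborel_shift_nn:
  fixes h :: "'a::euclidean_space \<Rightarrow> ennreal"
  assumes [measurable]: "h \<in> borel_measurable borel"
  shows "(\<integral>\<^sup>+x. h (t + x) \<partial>lborel) = (\<integral>\<^sup>+y. h y \<partial>lborel)"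
proof -
  have "(\<integral>\<^sup>+y. h y \<partial>lborel) = (\<integral>\<^sup>+y. h y \<partial>(distr lborel borel ((+) t)))"
    by (simp add: lborel_distr_plus)
  also have "\<dots> = (\<integral>\<^sup>+x. h (t + x) \<partial>lborel)"
    by (rule nn_integral_distr) auto
  finally show ?thesis by simp
qed

lemma translate_pos:
  fixes E1 E2 :: "'a::euclidean_space set"
  assumes [measurable]: "E1 \<in> sets borel" "E2 \<in> sets borel"
   and p1: "emeasure lborel E1 > 0" and p2: "emeasure lborel E2 > 0"
  shows "\<exists>t. emeasure lborel {x\<in>E1. x + t \<in> E2} > 0"
proof (rule ccontr)
  assume "\<not> ?thesis"
  hence z: "\<And>t. emeasure lborel {x\<in>E1. x + t \<in> E2} = 0" by (auto simp: not_less)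
  have m: "(\<lambda>(x,t). indicator E1 x * indicator E2 (x+t) :: ennreal) \<in> borel_measurable (lborel \<Otimes>\<^sub>M (lborel::'a measure))"
  proof -
    have "sets (lborel \<Otimes>\<^sub>M (lborel::'a measure)) = sets (borel::('a\<times>'a) measure)"
      by (metis borel_prod sets_lborel sets_pair_measure_cong)
    then have e: "borel_measurable (lborel \<Otimes>\<^sub>M (lborel::'a measure)) = borel_measurable (borel::('a\<times>'a) measure)"
      by (intro measurable_cong_sets) auto
    have a: "(\<lambda>p::'a\<times>'a. fst p + snd p) \<in> borel_measurable borel"
      by (intro borel_measurable_continuous_onI continuous_intros)
    have b: "(\<lambda>p::'a\<times>'a. indicator E2 (fst p + snd p) :: ennreal) \<in> borel_measurable borel"
      using measurable_compose[OF a borel_measurable_indicator[of E2]] by simp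
    have c: "(\<lambda>p::'a\<times>'a. indicator E1 (fst p) :: ennreal) \<in> borel_measurable borel"
      using measurable_compose[OF borel_measurable_continuous_onI[OF continuous_on_fst[OF continuous_on_id]] borel_measurable_indicator[of E1]] by simp
    have "(\<lambda>p::'a\<times>'a. indicator E1 (fst p) * indicator E2 (fst p + snd p) :: ennreal) \<in> borel_measurable borel"
      using b c by measurable 
    then show ?thesis unfolding e by (simp add: case_prod_beta')
  qed
  have "(\<integral>\<^sup>+t. \<integral>\<^sup>+x. indicator E1 x * indicator E2 (x+t) \<partial>lborel \<partial>lborel) = (\<integral>\<^sup>+x. \<integral>\<^sup>+t. indicator E1 x * indicator E2 (x+t) \<partial>lborel \<partial>(lborel::'a measure))"
    by (rule lborel_pair.Fubini'[OF m])
  moreover have "(\<integral>\<^sup>+t. \<integral>\<^sup>+x. indicator E1 x * indicator E2 (x+t) \<partial>lborel \<partial>lborel) = (0::ennreal)"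
  proof -
    have "\<And>t. (\<integral>\<^sup>+x. indicator E1 x * indicator E2 (x+t) \<partial>lborel) = emeasure lborel {x\<in>E1. x + t \<in> E2}"
    proof -
      fix t
      have "(\<lambda>x. indicator E1 x * indicator E2 (x+t) :: ennreal) = indicator {x\<in>E1. x + t \<in> E2}"
        by (auto simp: indicator_def)
      moreover have "{x\<in>E1. x + t \<in> E2} \<in> sets lborel" by measurable
      ultimately show "(\<integral>\<^sup>+x. indicator E1 x * indicator E2 (x+t) \<partial>lborel) = emeasure lborel {x\<in>E1. x + t \<in> E2}"
        by simp
    qed
    then show ?thesis by (simp add: z)
  qed
  moreover have "(\<integral>\<^sup>+x. \<integral>\<^sup>+t. indicator E1 x * indicator E2 (x+t) \<partial>lborel \<partial>(lborel::'a measure)) = emeasure lborel E2 * emeasure lborel E1"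
  proof -
    have "\<And>x. (\<integral>\<^sup>+t. indicator E1 x * indicator E2 (x+t) \<partial>lborel) = indicator E1 x * emeasure lborel E2"
    proof -
      fix x :: 'a
      have "(\<integral>\<^sup>+t. indicator E1 x * indicator E2 (x+t) \<partial>lborel) = indicator E1 x * (\<integral>\<^sup>+t. indicator E2 (x+t) \<partial>lborel)"
        by (rule nn_integral_cmult) measurable
      also have "(\<integral>\<^sup>+t. indicator E2 (x+t) \<partial>lborel) = (\<integral>\<^sup>+t. (indicator E2 t::ennreal) \<partial>lborel)"
        by (rule lborel_shift_nn) measurable
      finally show "(\<integral>\<^sup>+t. indicator E1 x * indicator E2 (x+t) \<partial>lborel) = indicator E1 x * emeasure lborel E2" by simp
    qed
    then have "(\<integral>\<^sup>+x. \<integral>\<^sup>+t. indicator E1 x * indicator E2 (x+t) \<partial>lborel \<partial>(lborel::'a measure)) = (\<integral>\<^sup>+x. emeasure lborel E2 * indicator E1 x \<partial>lborel)"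
      by (simp add: mult.commute)
    also have "\<dots> = emeasure lborel E2 * emeasure lborel E1"
      by (rule nn_integral_cmult_indicator) simp
    finally show ?thesis .
  qed
  ultimately show False using p1 p2 by (auto simp add: ennreal_zero_less_mult_iff)
qed
lemma lborel_shift_int:
  fixes h :: "'a::euclidean_space \<Rightarrow> complex"
  assumes [measurable]: "h \<in> borel_measurable borel"
  shows "(LINT x|lborel. h (t + x)) = (LINT y|lborel. h y)"
proof -
  have "(LINT y|lborel. h y) = (LINT y|(distr lborel borel ((+) t)). h y)"
    by (simp add: lborel_distr_plus)
  also have "\<dots> = (LINT x|lborel. h (t + x))"
    by (rule integral_distr) auto
  finally show ?thesis by simp
qed

lemma nn_ind_const:
  fixes F :: "'a::euclidean_space set"
  assumes [measurable]: "F \<in> sets borel" and r: "0 \<le> r"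
  shows "(\<integral>\<^sup>+x. ennreal (indicator F x * r) \<partial>lborel) = ennreal r * emeasure lborel F"
proof -
  have "(\<lambda>x. ennreal (indicator F x * r)) = (\<lambda>x. ennreal r * indicator F x)"
    by (auto simp: indicator_def)
  then show ?thesis by (simp add: nn_integral_cmult_indicator)
qed

lemma key:
  fixes g :: "'a::euclidean_space \<Rightarrow> real" and \<nu> :: "'a measure" and A B :: real
  assumes g_meas[measurable]: "g \<in> borel_measurable borel"
    and g_nonneg: "\<And>x. g x \<ge> 0"
    and frame: "frame_measure (density lborel (\<lambda>x. ennreal (g x))) \<nu> A B"
    and F[measurable]: "F \<in> sets borel" and Fpos: "0 < emeasure lborel F" and Ffin: "emeasure lborel F < \<infinity>"
    and M: "0 < M" "\<And>x. x \<in> F \<Longrightarrow> M \<le> g x"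
    and a: "0 < a" "0 < m" "\<And>x. x \<in> F \<Longrightarrow> a \<le> g (t + x) \<and> g (t + x) \<le> m"
  shows "A * M \<le> B * m"
proof -
  define \<mu> where "\<mu> = density lborel (\<lambda>x. ennreal (g x))"
  define c where "c = measure lborel F"
  have Fc: "emeasure lborel F = ennreal c" unfolding c_def using Ffin by (simp add: emeasure_eq_ennreal_measure)
  have cpos: "c > 0" using Fpos Fc by simp
  have AB: "A > 0" "B > 0" using frame by (auto simp: frame_measure_def)
  have mm0: "borel_measurable \<mu> = (borel_measurable borel :: ('a \<Rightarrow> complex) set)"
    unfolding \<mu>_def by (rule measurable_cong_sets) auto
  have mm: "\<And>h::'a \<Rightarrow> complex. h \<in> borel_measurable \<mu> \<longleftrightarrow> h \<in> borel_measurable borel" by (simp add: mm0)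
  define f1 where "f1 x = complex_of_real (indicator F x / g x)" for x
  define f2 where "f2 y = complex_of_real (indicator F (y - t) / g y)" for y
  have f1m: "f1 \<in> borel_measurable \<mu>" unfolding mm f1_def by measurable
  have f2m: "f2 \<in> borel_measurable \<mu>" unfolding mm f2_def by measurable
  have L1: "L2sq \<mu> f1 = (\<integral>\<^sup>+x. ennreal (indicator F x / g x) \<partial>lborel)"
  proof -
    have "L2sq \<mu> f1 = (\<integral>\<^sup>+x. ennreal (g x) * ennreal ((cmod (f1 x))\<^sup>2) \<partial>lborel)"
      unfolding L2sq_def \<mu>_def by (rule nn_integral_density) (auto simp: f1_def)
    also have "\<dots> = (\<integral>\<^sup>+x. ennreal (indicator F x / g x) \<partial>lborel)"
    proof (rule nn_integral_cong)
      fix x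
      show "ennreal (g x) * ennreal ((cmod (f1 x))\<^sup>2) = ennreal (indicator F x / g x)"
      proof (cases "x \<in> F")
        case True
        then have gp: "g x > 0" using M by force
        have cm: "(cmod (f1 x))\<^sup>2 = (1 / g x)\<^sup>2"
          using True gp by (simp add: f1_def norm_divide)
        have "ennreal (g x) * ennreal ((cmod (f1 x))\<^sup>2) = ennreal (g x * (1 / g x)\<^sup>2)"
          unfolding cm using gp by (simp add: ennreal_mult'')
        also have "g x * (1 / g x)\<^sup>2 = 1 / g x" using gp by (simp add: power2_eq_square field_simps)
        finally show ?thesis using True by simp
      qed (simp add: f1_def)
    qed
    finally show ?thesis .
  qed
  have L2: "L2sq \<mu> f2 = (\<integral>\<^sup>+x. ennreal (indicator F x / g (t + x)) \<partial>lborel)"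
  proof -
    have "L2sq \<mu> f2 = (\<integral>\<^sup>+y. ennreal (g y) * ennreal ((cmod (f2 y))\<^sup>2) \<partial>lborel)"
      unfolding L2sq_def \<mu>_def by (rule nn_integral_density) (auto simp: f2_def)
    also have "\<dots> = (\<integral>\<^sup>+y. ennreal (indicator F (y - t) / g y) \<partial>lborel)"
    proof (rule nn_integral_cong)
      fix y
      show "ennreal (g y) * ennreal ((cmod (f2 y))\<^sup>2) = ennreal (indicator F (y - t) / g y)"
      proof (cases "y - t \<in> F")
        case True
        then have gp: "g y > 0" using a(3)[of "y - t"] a(1) by simp
        have cm: "(cmod (f2 y))\<^sup>2 = (1 / g y)\<^sup>2"
          using True gp by (simp add: f2_def norm_divide)
        have "ennreal (g y) * ennreal ((cmod (f2 y))\<^sup>2) = ennreal (g y * (1 / g y)\<^sup>2)"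
          unfolding cm using gp by (simp add: ennreal_mult'')
        also have "g y * (1 / g y)\<^sup>2 = 1 / g y" using gp by (simp add: power2_eq_square field_simps)
        finally show ?thesis using True by simp
      qed (simp add: f2_def)
    qed
    also have "\<dots> = (\<integral>\<^sup>+x. ennreal (indicator F (t + x - t) / g (t + x)) \<partial>lborel)"
      by (rule lborel_shift_nn[symmetric]) measurable
    finally show ?thesis by simp
  qed
  have U1: "L2sq \<mu> f1 \<le> ennreal (1 / M) * ennreal c"
  proof -
    have "L2sq \<mu> f1 \<le> (\<integral>\<^sup>+x. ennreal (indicator F x * (1 / M)) \<partial>lborel)"
      unfolding L1
    proof (rule nn_integral_mono)
      fix x show "ennreal (indicator F x / g x) \<le> ennreal (indicator F x * (1 / M))"
        using M by (cases "x \<in> F") (auto intro!: ennreal_leI frac_le)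
    qed
    also have "\<dots> = ennreal (1 / M) * ennreal c" using nn_ind_const[OF F, of "1/M"] M by (simp add: Fc)
    finally show ?thesis .
  qed
  have L2lo: "ennreal (1 / m) * ennreal c \<le> L2sq \<mu> f2"
  proof -
    have "ennreal (1 / m) * ennreal c = (\<integral>\<^sup>+x. ennreal (indicator F x * (1 / m)) \<partial>lborel)"
      using nn_ind_const[OF F, of "1/m"] a by (simp add: Fc)
    also have "\<dots> \<le> L2sq \<mu> f2"
      unfolding L2
    proof (rule nn_integral_mono)
      fix x show "ennreal (indicator F x * (1 / m)) \<le> ennreal (indicator F x / g (t + x))"
        using a(3)[of x] a(1,2) g_nonneg[of "t+x"] by (cases "x \<in> F") (auto intro!: ennreal_leI frac_le)
    qed
    finally show ?thesis .
  qed
  have L2up: "L2sq \<mu> f2 \<le> ennreal (1 / a) * ennreal c"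
  proof -
    have "L2sq \<mu> f2 \<le> (\<integral>\<^sup>+x. ennreal (indicator F x * (1 / a)) \<partial>lborel)"
      unfolding L2
    proof (rule nn_integral_mono)
      fix x show "ennreal (indicator F x / g (t + x)) \<le> ennreal (indicator F x * (1 / a))"
        using a(3)[of x] a(1,2) g_nonneg[of "t+x"] by (cases "x \<in> F") (auto intro!: ennreal_leI frac_le)
    qed
    also have "\<dots> = ennreal (1 / a) * ennreal c" using nn_ind_const[OF F, of "1/a"] a by (simp add: Fc)
    finally show ?thesis .
  qed
  have fin1: "L2sq \<mu> f1 < \<infinity>" using U1 by (simp add: ennreal_mult_less_top le_less_trans[OF U1] )
  have fin2: "L2sq \<mu> f2 < \<infinity>" by (rule le_less_trans[OF L2up]) (simp add: ennreal_mult_less_top)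
  define H where "H s = (LINT x|lborel. indicator F x *\<^sub>R cis (- 2 * pi * (s \<bullet> x)))" for s
  have FT1: "fourier_meas \<mu> f1 s = H s" for s
  proof -
    have "fourier_meas \<mu> f1 s = (LINT x|lborel. g x *\<^sub>R (f1 x * cis (- 2 * pi * (s \<bullet> x))))"
      unfolding fourier_meas_def \<mu>_def
    proof (rule integral_density)
      have cm: "(\<lambda>x. cis (- 2 * pi * (s \<bullet> x))) \<in> borel_measurable borel"
        by (intro borel_measurable_continuous_onI continuous_intros)
      have "f1 \<in> borel_measurable borel" using f1m mm by blast
      then have "(\<lambda>x. f1 x * cis (- 2 * pi * (s \<bullet> x))) \<in> borel_measurable borel"
        using cm by (rule borel_measurable_times)
      then show "(\<lambda>x. f1 x * cis (- 2 * pi * (s \<bullet> x))) \<in> borel_measurable lborel" by simp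
    qed (auto simp: g_nonneg)
    also have "\<dots> = H s" unfolding H_def
    proof (rule Bochner_Integration.integral_cong)
      fix x show "g x *\<^sub>R (f1 x * cis (- 2 * pi * (s \<bullet> x))) = indicator F x *\<^sub>R cis (- 2 * pi * (s \<bullet> x))"
      proof (cases "x \<in> F")
        case True
        then have gp: "g x > 0" using M by force
        then show ?thesis using True by (simp add: f1_def scaleR_conv_of_real)
      qed (simp add: f1_def)
    qed simp
    finally show ?thesis .
  qed
  have FT2: "fourier_meas \<mu> f2 s = cis (- 2 * pi * (s \<bullet> t)) * H s" for s
  proof -
    have "fourier_meas \<mu> f2 s = (LINT y|lborel. g y *\<^sub>R (f2 y * cis (- 2 * pi * (s \<bullet> y))))"
      unfolding fourier_meas_def \<mu>_def
    proof (rule integral_density)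
      have cm: "(\<lambda>x. cis (- 2 * pi * (s \<bullet> x))) \<in> borel_measurable borel"
        by (intro borel_measurable_continuous_onI continuous_intros)
      have "f2 \<in> borel_measurable borel" using f2m mm by blast
      then have "(\<lambda>x. f2 x * cis (- 2 * pi * (s \<bullet> x))) \<in> borel_measurable borel"
        using cm by (rule borel_measurable_times)
      then show "(\<lambda>x. f2 x * cis (- 2 * pi * (s \<bullet> x))) \<in> borel_measurable lborel" by simp
    qed (auto simp: g_nonneg)
    also have "\<dots> = (LINT y|lborel. indicator F (y - t) *\<^sub>R cis (- 2 * pi * (s \<bullet> y)))"
    proof (rule Bochner_Integration.integral_cong)
      fix y show "g y *\<^sub>R (f2 y * cis (- 2 * pi * (s \<bullet> y))) = indicator F (y - t) *\<^sub>R cis (- 2 * pi * (s \<bullet> y))"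
      proof (cases "y - t \<in> F")
        case True
        then have gp: "g y > 0" using a(3)[of "y - t"] a(1) by simp
        then show ?thesis using True by (simp add: f2_def scaleR_conv_of_real)
      qed (simp add: f2_def)
    qed simp
    also have "\<dots> = (LINT x|lborel. indicator F (t + x - t) *\<^sub>R cis (- 2 * pi * (s \<bullet> (t + x))))"
    proof (rule lborel_shift_int[symmetric])
      have cm: "(\<lambda>x. cis (- 2 * pi * (s \<bullet> x))) \<in> borel_measurable borel"
        by (intro borel_measurable_continuous_onI continuous_intros)
      have "(\<lambda>y. indicator F (y - t) :: real) \<in> borel_measurable borel" by measurable
      then show "(\<lambda>y. indicator F (y - t) *\<^sub>R cis (- 2 * pi * (s \<bullet> y))) \<in> borel_measurable borel"
        using cm by (rule borel_measurable_scaleR)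
    qed
    also have "\<dots> = (LINT x|lborel. cis (- 2 * pi * (s \<bullet> t)) * (indicator F x *\<^sub>R cis (- 2 * pi * (s \<bullet> x))))"
    proof (rule Bochner_Integration.integral_cong)
      fix x
      have e: "cis (- 2 * pi * (s \<bullet> (t + x))) = cis (- 2 * pi * (s \<bullet> t)) * cis (- 2 * pi * (s \<bullet> x))"
        by (simp add: cis_mult inner_add_right algebra_simps)
      show "indicator F (t + x - t) *\<^sub>R cis (- 2 * pi * (s \<bullet> (t + x))) = cis (- 2 * pi * (s \<bullet> t)) * (indicator F x *\<^sub>R cis (- 2 * pi * (s \<bullet> x)))"
        unfolding e by (simp add: scaleR_conv_of_real)
    qed simp
    also have "\<dots> = cis (- 2 * pi * (s \<bullet> t)) * H s" unfolding H_def by (rule integral_mult_right_zero)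
    finally show ?thesis .
  qed
  have same: "L2sq \<nu> (fourier_meas \<mu> f2) = L2sq \<nu> (fourier_meas \<mu> f1)"
    unfolding L2sq_def FT1 FT2 by (simp add: norm_mult)
  have fr: "ennreal A * L2sq \<mu> f2 \<le> L2sq \<nu> (fourier_meas \<mu> f2)"
           "L2sq \<nu> (fourier_meas \<mu> f1) \<le> ennreal B * L2sq \<mu> f1"
    using frame f1m f2m fin1 fin2 unfolding frame_measure_def \<mu>_def[symmetric] by blast+
  have "ennreal A * (ennreal (1 / m) * ennreal c) \<le> ennreal B * (ennreal (1 / M) * ennreal c)"
  proof -
    have "ennreal A * (ennreal (1 / m) * ennreal c) \<le> ennreal A * L2sq \<mu> f2"
      by (rule mult_left_mono[OF L2lo]) simp
    also have "\<dots> \<le> ennreal B * L2sq \<mu> f1" using fr same by simp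
    also have "\<dots> \<le> ennreal B * (ennreal (1 / M) * ennreal c)"
      by (rule mult_left_mono[OF U1]) simp
    finally show ?thesis .
  qed
  then have "A * (1 / m * c) \<le> B * (1 / M * c)"
    using AB a M cpos by (simp add: ennreal_mult''[symmetric] ennreal_mult[symmetric] ennreal_le_iff)
  then have "A * c / m \<le> B * c / M" by simp
  then show ?thesis using a M cpos by (simp add: field_simps)
qed

lemma density_pos_lborel:
  fixes g :: "'a::euclidean_space \<Rightarrow> real"
  assumes [measurable]: "g \<in> borel_measurable borel" "X \<in> sets borel"
    and p: "emeasure (density lborel (\<lambda>x. ennreal (g x))) X > 0"
  shows "emeasure lborel X > 0"
proof (rule ccontr)
  assume "\<not> ?thesis"
  then have z: "emeasure lborel X = 0" by simp
  have "emeasure (density lborel (\<lambda>x. ennreal (g x))) X = (\<integral>\<^sup>+x. ennreal (g x) * indicator X x \<partial>lborel)"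
    by (rule emeasure_density) auto
  also have "\<dots> = (\<integral>\<^sup>+x. 0 \<partial>(lborel::'a measure))"
  proof (rule nn_integral_cong_AE)
    have "AE x in lborel. x \<notin> X" using z by (intro AE_not_in) auto
    then show "AE x in lborel. ennreal (g x) * indicator X x = 0" by eventually_elim simp
  qed
  finally show False using p by simp
qed

lemma core:
  fixes g :: "'a::euclidean_space \<Rightarrow> real" and \<nu> :: "'a measure" and A B :: real
  assumes g_meas[measurable]: "g \<in> borel_measurable borel"
    and g_nonneg: "\<And>x. g x \<ge> 0"
    and frame: "frame_measure (density lborel (\<lambda>x. ennreal (g x))) \<nu> A B"
    and r: "0 < r" and m: "0 < m"
    and pr: "emeasure (density lborel (\<lambda>x. ennreal (g x))) {x. g x > r} > 0"
    and pm: "emeasure (density lborel (\<lambda>x. ennreal (g x))) {x. g x < m} > 0"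
  shows "A * r \<le> B * m"
proof -
  define \<mu> where "\<mu> = density lborel (\<lambda>x. ennreal (g x))"
  define E1 where "E1 = {x. g x > r}"
  have [measurable]: "E1 \<in> sets borel" unfolding E1_def by measurable
  have E1p: "emeasure lborel E1 > 0" unfolding E1_def
    by (rule density_pos_lborel[OF g_meas _ pr]) measurable
  obtain n :: nat where n: "emeasure lborel (E1 \<inter> ball 0 (real n)) > 0"
  proof (rule ccontr)
    assume "\<not> thesis"
    then have "\<And>n::nat. emeasure lborel (E1 \<inter> ball 0 (real n)) = 0" using that by (meson not_gr_zero)
    then have "emeasure lborel (\<Union>n::nat. E1 \<inter> ball 0 (real n)) = 0"
      by (intro emeasure_UN_eq_0) auto
    moreover have "(\<Union>n::nat. E1 \<inter> ball 0 (real n)) = E1"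
    proof -
      have "\<And>x. \<exists>n::nat. x \<in> ball 0 (real n)"
        by (metis reals_Archimedean2 dist_0_norm mem_ball)
      then show ?thesis by blast
    qed
    ultimately show False using E1p by simp
  qed
  define E1' where "E1' = E1 \<inter> ball 0 (real n)"
  have [measurable]: "E1' \<in> sets borel" unfolding E1'_def by measurable
  obtain k :: nat where k: "emeasure \<mu> {x. 1 / Suc k \<le> g x \<and> g x < m} > 0"
  proof (rule ccontr)
    assume "\<not> thesis"
    then have z: "\<And>k::nat. emeasure \<mu> {x. 1 / Suc k \<le> g x \<and> g x < m} = 0" using that by (meson not_gr_zero)
    have z0: "emeasure \<mu> {x. g x = 0} = 0"
    proof -
      have "emeasure \<mu> {x. g x = 0} = (\<integral>\<^sup>+x. ennreal (g x) * indicator {x. g x = 0} x \<partial>lborel)"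
        unfolding \<mu>_def by (rule emeasure_density) auto
      also have "\<dots> = (\<integral>\<^sup>+x. 0 \<partial>(lborel::'a measure))"
        by (rule nn_integral_cong) (auto simp: indicator_def)
      finally show ?thesis by simp
    qed
    let ?N = "{x. g x = 0} \<union> (\<Union>k::nat. {x. 1 / Suc k \<le> g x \<and> g x < m})"
    have "emeasure \<mu> ?N = 0"
    proof -
      have "?N \<in> null_sets \<mu>"
        using z z0 unfolding \<mu>_def by (intro null_sets.Un null_sets_UN) (auto simp: null_sets_def)
      then show ?thesis by auto
    qed
    moreover have "{x. g x < m} \<subseteq> ?N"
    proof
      fix x assume x: "x \<in> {x. g x < m}"
      show "x \<in> ?N"
      proof (cases "g x = 0")
        case False
        then have "g x > 0" using g_nonneg[of x] by simp
        then obtain k :: nat where "inverse (real (Suc k)) < g x"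
          using reals_Archimedean by blast
        then have "1 / Suc k \<le> g x" by (simp add: inverse_eq_divide)
        then show ?thesis using x by force
      qed simp
    qed
    moreover have "?N \<in> sets \<mu>" unfolding \<mu>_def by measurable
    ultimately have "emeasure \<mu> {x. g x < m} = 0"
      by (metis (no_types, lifting) emeasure_eq_0)
    then show False using pm unfolding \<mu>_def by simp
  qed
  define E2 where "E2 = {x. 1 / Suc k \<le> g x \<and> g x < m}"
  have [measurable]: "E2 \<in> sets borel" unfolding E2_def by measurable
  have E2p: "emeasure lborel E2 > 0" unfolding E2_def
    by (rule density_pos_lborel[OF g_meas _ k[unfolded \<mu>_def]]) measurable
  obtain t where t: "emeasure lborel {x\<in>E1'. x + t \<in> E2} > 0"
    using translate_pos[of E1' E2] n E2p unfolding E1'_def by auto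
  define F where "F = {x\<in>E1'. x + t \<in> E2}"
  have [measurable]: "F \<in> sets borel" unfolding F_def by measurable
  have Ffin: "emeasure lborel F < \<infinity>"
  proof -
    have "emeasure lborel F \<le> emeasure lborel (ball (0::'a) (real n))"
      by (rule emeasure_mono) (auto simp: F_def E1'_def)
    also have "\<dots> < \<infinity>" by (rule emeasure_lborel_ball_finite)
    finally show ?thesis .
  qed
  show ?thesis
  proof (rule key[OF g_meas g_nonneg frame _ _ Ffin r _ _ m, of "1 / Suc k" t])
    show "0 < emeasure lborel F" using t unfolding F_def .
    show "\<And>x. x \<in> F \<Longrightarrow> r \<le> g x" by (auto simp: F_def E1'_def E1_def)
    show "\<And>x. x \<in> F \<Longrightarrow> 1 / real (Suc k) \<le> g (t + x) \<and> g (t + x) \<le> m"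
      by (auto simp: F_def E2_def add.commute)
  qed auto
qed

theorem theorem2p4:
  fixes g :: "'a::euclidean_space \<Rightarrow> real" and \<nu> :: "'a measure" and A B :: real
  assumes g_meas: "g \<in> borel_measurable borel"
    and g_nonneg: "\<And>x. g x \<ge> 0"
    and fin: "finite_measure (density lborel (\<lambda>x. ennreal (g x)))"
    and frame: "frame_measure (density lborel (\<lambda>x. ennreal (g x))) \<nu> A B"
  shows "ennreal (B / A) \<ge>
           ess_sup_mu (density lborel (\<lambda>x. ennreal (g x))) (\<lambda>x. ennreal (g x))
         / ess_inf_mu (density lborel (\<lambda>x. ennreal (g x))) (\<lambda>x. ennreal (g x))
         \<and> (ess_sup_mu (density lborel (\<lambda>x. ennreal (g x))) (\<lambda>x. ennreal (g x)) \<noteq> \<infinity>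
         \<and> ess_inf_mu (density lborel (\<lambda>x. ennreal (g x))) (\<lambda>x. ennreal (g x)) \<noteq> 0)"
proof -
  note [measurable] = g_meas
  define \<mu> where "\<mu> = density lborel (\<lambda>x. ennreal (g x))"
  define S where "S = ess_sup_mu \<mu> (\<lambda>x. ennreal (g x))"
  define I where "I = ess_inf_mu \<mu> (\<lambda>x. ennreal (g x))"
  have AB: "A > 0" "B > 0" using frame by (auto simp: frame_measure_def)
  have sp: "space \<mu> = UNIV" unfolding \<mu>_def by simp
  have C: "A * r \<le> B * m" if "0 < r" "0 < m" "emeasure \<mu> {x. g x > r} > 0" "emeasure \<mu> {x. g x < m} > 0" for r m
    using core[OF g_meas g_nonneg frame that[unfolded \<mu>_def]] .
  have P1: "emeasure \<mu> {x. g x > r} > 0" if "0 \<le> r" "ennreal r < S" for r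
  proof (rule ccontr)
    assume "\<not> ?thesis"
    then have "emeasure \<mu> {x. g x > r} = 0" by simp
    then have "AE x in \<mu>. ennreal (g x) \<le> ennreal r"
      by (subst AE_iff_measurable[of "{x. g x > r}"]) (auto simp: sp \<mu>_def ennreal_le_iff that)
    then have "S \<le> ennreal r" unfolding S_def ess_sup_mu_def by (intro Inf_lower) simp
    then show False using that by simp
  qed
  have P2: "emeasure \<mu> {x. g x < m} > 0" if "0 \<le> m" "I < ennreal m" for m
  proof (rule ccontr)
    assume "\<not> ?thesis"
    then have "emeasure \<mu> {x. g x < m} = 0" by simp
    then have "AE x in \<mu>. ennreal m \<le> ennreal (g x)"
      by (subst AE_iff_measurable[of "{x. g x < m}"]) (auto simp: sp \<mu>_def ennreal_le_iff g_nonneg not_le)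
    then have "ennreal m \<le> I" unfolding I_def ess_inf_mu_def by (intro Sup_upper) simp
    then show False using that by simp
  qed
  show ?thesis
  proof (cases "emeasure \<mu> UNIV = 0")
    case True
    then have ae: "AE x in \<mu>. P x" for P
      by (intro AE_I[of _ _ UNIV]) (auto simp: sp \<mu>_def)
    have "S = 0" unfolding S_def ess_sup_mu_def using ae by (simp add: Inf_eq_bot_iff) (metis bot_ennreal)
    moreover have "I = \<infinity>" unfolding I_def ess_inf_mu_def using ae by simp
    ultimately show ?thesis unfolding S_def I_def \<mu>_def by simp
  next
    case False
    then have Upos: "emeasure \<mu> UNIV > 0" by (simp add: zero_less_iff_neq_zero)
    obtain m0 :: real where m0: "0 < m0" "emeasure \<mu> {x. g x < m0} > 0"
    proof -
      obtain n :: nat where n: "emeasure \<mu> {x. g x < real (Suc n)} > 0"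
      proof (rule ccontr)
        assume "\<not> thesis"
        then have "\<And>n::nat. emeasure \<mu> {x. g x < real (Suc n)} = 0" using that by (meson not_gr_zero)
        then have "emeasure \<mu> (\<Union>n::nat. {x. g x < real (Suc n)}) = 0"
          by (intro emeasure_UN_eq_0) (auto simp: \<mu>_def)
        moreover have "(\<Union>n::nat. {x. g x < real (Suc n)}) = UNIV"
        proof -
          have "\<And>x. \<exists>n::nat. g x < real (Suc n)"
            by (metis reals_Archimedean2 less_trans of_nat_Suc lessI of_nat_less_iff)
          then show ?thesis by blast
        qed
        ultimately show False using Upos by simp
      qed
      then show ?thesis using that[of "real (Suc n)"] by simp
    qed
    obtain r0 :: real where r0: "0 < r0" "emeasure \<mu> {x. g x > r0} > 0"
    proof -
      obtain k :: nat where k: "emeasure \<mu> {x. g x > 1 / Suc k} > 0"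
      proof (rule ccontr)
        assume "\<not> thesis"
        then have z: "\<And>k::nat. emeasure \<mu> {x. g x > 1 / Suc k} = 0" using that by (meson not_gr_zero)
        have z0: "emeasure \<mu> {x. g x = 0} = 0"
        proof -
          have "emeasure \<mu> {x. g x = 0} = (\<integral>\<^sup>+x. ennreal (g x) * indicator {x. g x = 0} x \<partial>lborel)"
            unfolding \<mu>_def by (rule emeasure_density) auto
          also have "\<dots> = (\<integral>\<^sup>+x. 0 \<partial>(lborel::'a measure))"
            by (rule nn_integral_cong) (auto simp: indicator_def)
          finally show ?thesis by simp
        qed
        let ?N = "{x. g x = 0} \<union> (\<Union>k::nat. {x. g x > 1 / Suc k})"
        have "?N \<in> null_sets \<mu>"
          using z z0 unfolding \<mu>_def by (intro null_sets.Un null_sets_UN) (auto simp: null_sets_def)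
        then have "emeasure \<mu> ?N = 0" by auto
        moreover have "?N = UNIV"
        proof -
          have "x \<in> ?N" for x
          proof (cases "g x = 0")
            case False
            then have "g x > 0" using g_nonneg[of x] by simp
            then obtain k :: nat where "inverse (real (Suc k)) < g x"
              using reals_Archimedean by blast
            then have "1 / Suc k < g x" by (simp add: inverse_eq_divide)
            then show ?thesis by blast
          qed simp
          then show ?thesis by blast
        qed
        ultimately show False using Upos by simp
      qed
      then show ?thesis using that[of "1 / Suc k"] by simp
    qed
    have Sfin: "S \<noteq> \<infinity>"
    proof
      assume "S = \<infinity>"
      define r where "r = B * m0 / A + 1"
      have rp: "r > 0" unfolding r_def using AB m0 by (simp add: field_simps add_pos_pos)
      have "A * r \<le> B * m0" using C[OF rp m0(1) P1 m0(2)] rp \<open>S = \<infinity>\<close> by simp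
      then show False using AB unfolding r_def by (simp add: field_simps) (metis AB(1) mult_pos_pos not_le)
    qed
    have Ipos: "I \<noteq> 0"
    proof
      assume "I = 0"
      define m where "m = A * r0 / (2 * B)"
      have mp: "m > 0" unfolding m_def using AB r0 by simp
      have "A * r0 \<le> B * m" using C[OF r0(1) mp r0(2) P2] mp \<open>I = 0\<close> by simp
      then show False using AB r0 unfolding m_def by (simp add: field_simps)
    qed
    obtain s where s: "S = ennreal s" "0 \<le> s" using Sfin by (cases S) auto
    have Ifin: "I \<noteq> \<infinity>"
    proof
      assume "I = \<infinity>"
      then have "ennreal m0 < I" by simp
      then have "ennreal m0 < Sup {m. AE x in \<mu>. m \<le> ennreal (g x)}"
        unfolding I_def ess_inf_mu_def .
      then obtain y where y: "AE x in \<mu>. y \<le> ennreal (g x)" "ennreal m0 < y"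
        by (auto simp: less_Sup_iff)
      from y(1) have "AE x in \<mu>. ennreal m0 \<le> ennreal (g x)"
        by eventually_elim (use y(2) in auto)
      then have "emeasure \<mu> {x. g x < m0} = 0"
        by (subst (asm) AE_iff_measurable[of "{x. g x < m0}"]) (auto simp: sp \<mu>_def ennreal_le_iff g_nonneg not_le)
      then show False using m0 by simp
    qed
    obtain i where i: "I = ennreal i" "0 < i" using Ifin Ipos by (cases I) auto
    have key: "A * (s - e) \<le> B * (i + e)" if e: "e > 0" for e
    proof (cases "s - e > 0")
      case True
      have "A * (s - e) \<le> B * (i + e)"
        by (rule C[OF True _ P1 P2]) (use e i s True in \<open>auto simp: ennreal_less_iff\<close>)
      then show ?thesis .
    next
      case False
      then have "A * (s - e) \<le> 0" using AB by (simp add: mult_nonneg_nonpos)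
      also have "0 \<le> B * (i + e)" using AB i e by simp
      finally show ?thesis .
    qed
    have "A * s \<le> B * i"
    proof (rule field_le_epsilon)
      fix e :: real assume e: "0 < e"
      have "A * (s - e / (A + B)) \<le> B * (i + e / (A + B))" using key[of "e / (A + B)"] e AB by simp
      then have "A * s \<le> B * i + (A + B) * (e / (A + B))" by (simp add: algebra_simps add_divide_distrib)
      then show "A * s \<le> B * i + e" using AB by simp
    qed
    then have "s / i \<le> B / A" using AB i by (simp add: field_simps)
    then have "S / I \<le> ennreal (B / A)" using s i by (simp add: divide_ennreal ennreal_leI)
    then show ?thesis using Sfin Ipos unfolding S_def I_def \<mu>_def by simp
  qed
qed

end
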